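(* Let $7/3<p<5$. Then the function $m\mapsto E_{\min}(m)$ is continuous on $(0,\infty)$.
   Context: On $H^1(\mathbb{R}^3)$: $\mathcal{E}(u)=\frac12\|\nabla u\|_{L^2}^2-\frac1{p+1}\|u\|_{L^{p+1}}^{p+1}-\frac16\|u\|_{L^6}^6$, $\mathcal{K}(u)=\|\nabla u\|_{L^2}^2-\frac{3(p-1)}{2(p+1)}\|u\|_{L^{p+1}}^{p+1}-\|u\|_{L^6}^6$, and $E_{\min}(m)=\inf\{\mathcal{E}(u):u\in H^1(\mathbb{R}^3),\ \|u\|_{L^2}^2=m,\ \mathcal{K}(u)=0\}$. *)

theory Defs
  imports "HOL-Analysis.Analysis"
begin

definition test_fun :: "(real^3 \<Rightarrow> real) \<Rightarrow> (real^3 \<Rightarrow> real^3) \<Rightarrow> bool" where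
  "test_fun phi Dphi \<longleftrightarrow>
     (\<forall>x. (phi has_derivative (\<lambda>h. Dphi x \<bullet> h)) (at x)) \<and>
     continuous_on UNIV Dphi \<and>
     compact (closure {x. phi x \<noteq> 0})"

definition weak_grad :: "(real^3 \<Rightarrow> complex) \<Rightarrow> (3 \<Rightarrow> real^3 \<Rightarrow> complex) \<Rightarrow> bool" where
  "weak_grad u G \<longleftrightarrow>
     (\<forall>phi Dphi. test_fun phi Dphi \<longrightarrow>
        (\<forall>i. (LINT x|lborel. u x * of_real (Dphi x $ i)) =
             - (LINT x|lborel. G i x * of_real (phi x))))"

definition H1 :: "(real^3 \<Rightarrow> complex) \<Rightarrow> bool" where
  "H1 u \<longleftrightarrow>
     u \<in> borel_measurable lborel \<and> integrable lborel (\<lambda>x. (cmod (u x))\<^sup>2) \<and>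
     (\<exists>G. weak_grad u G \<and>
          (\<forall>i. G i \<in> borel_measurable lborel \<and> integrable lborel (\<lambda>x. (cmod (G i x))\<^sup>2)))"

text \<open>||grad u||_{L^2}^2 (the weak gradient is unique a.e., so this is well defined on H^1).\<close>
definition grad_sq :: "(real^3 \<Rightarrow> complex) \<Rightarrow> real" where
  "grad_sq u = (SOME s. \<exists>G. weak_grad u G \<and>
       (\<forall>i. G i \<in> borel_measurable lborel \<and> integrable lborel (\<lambda>x. (cmod (G i x))\<^sup>2)) \<and>
       s = (\<Sum>i\<in>UNIV. LINT x|lborel. (cmod (G i x))\<^sup>2))"

definition Lq_pow :: "real \<Rightarrow> (real^3 \<Rightarrow> complex) \<Rightarrow> real" where
  "Lq_pow q u = (LINT x|lborel. cmod (u x) powr q)"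

definition energy :: "real \<Rightarrow> (real^3 \<Rightarrow> complex) \<Rightarrow> real" where
  "energy p u = grad_sq u / 2 - Lq_pow (p + 1) u / (p + 1) - Lq_pow 6 u / 6"

definition virial :: "real \<Rightarrow> (real^3 \<Rightarrow> complex) \<Rightarrow> real" where
  "virial p u = grad_sq u - 3 * (p - 1) / (2 * (p + 1)) * Lq_pow (p + 1) u - Lq_pow 6 u"

definition E_min :: "real \<Rightarrow> real \<Rightarrow> real" where
  "E_min p m = Inf {energy p u | u. H1 u \<and> Lq_pow 2 u = m \<and> virial p u = 0}"

end

theory Submission
  imports Defs "HOL-Analysis.Radon_Nikodym"
begin

lemma nn_integral_scale:
  fixes f :: "'a::euclidean_space \<Rightarrow> ennreal"
  assumes [measurable]: "f \<in> borel_measurable borel" and c: "c \<noteq> 0"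
  shows "(\<integral>\<^sup>+x. f x \<partial>lborel) = ennreal (\<bar>c\<bar>^DIM('a)) * (\<integral>\<^sup>+x. f (c *\<^sub>R x) \<partial>lborel)"
  by (subst lborel_affine[OF c, of 0])
     (simp add: nn_integral_density nn_integral_distr nn_integral_cmult)

lemma lborel_integrable_scale:
  fixes f :: "'a::euclidean_space \<Rightarrow> 'b :: {banach, second_countable_topology}"
  assumes f: "integrable lborel f" and c: "c \<noteq> 0"
  shows "integrable lborel (\<lambda>x. f (c *\<^sub>R x))"
proof -
  have [measurable]: "f \<in> borel_measurable borel" using f by auto
  have "(\<integral>\<^sup>+x. ennreal (norm (f x)) \<partial>lborel) < \<infinity>" using f by (simp add: integrable_iff_bounded)
  then have "ennreal (\<bar>c\<bar>^DIM('a)) * (\<integral>\<^sup>+x. ennreal (norm (f (c *\<^sub>R x))) \<partial>lborel) < \<infinity>"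
    by (subst (asm) nn_integral_scale[OF _ c]) auto
  moreover have "ennreal (\<bar>c\<bar>^DIM('a)) > 0" using c by auto
  ultimately have "(\<integral>\<^sup>+x. ennreal (norm (f (c *\<^sub>R x))) \<partial>lborel) < \<infinity>"
    by (auto simp: ennreal_mult_less_top)
  then show ?thesis by (auto simp: integrable_iff_bounded)
qed

lemma lborel_integrable_scale_iff:
  fixes f :: "'a::euclidean_space \<Rightarrow> 'b :: {banach, second_countable_topology}"
  assumes c: "c \<noteq> 0"
  shows "integrable lborel (\<lambda>x. f (c *\<^sub>R x)) \<longleftrightarrow> integrable lborel f"
  using lborel_integrable_scale[of f c] lborel_integrable_scale[of "\<lambda>x. f (c *\<^sub>R x)" "1/c"] c
  by auto

lemma lborel_integral_scale:
  fixes f :: "'a::euclidean_space \<Rightarrow> 'b :: {banach, second_countable_topology}"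
  assumes c: "c \<noteq> 0"
  shows "(\<integral>x. f x \<partial>lborel) = (\<bar>c\<bar>^DIM('a)) *\<^sub>R (\<integral>x. f (c *\<^sub>R x) \<partial>lborel)"
proof cases
  assume f[measurable]: "integrable lborel f" then show ?thesis
    using c f f[THEN borel_measurable_integrable] lborel_integrable_scale[OF f c]
    by (subst lborel_affine[OF c, of 0])
       (simp add: integral_density integral_distr)
next
  assume "\<not> integrable lborel f" with c show ?thesis
    by (simp add: lborel_integrable_scale_iff not_integrable_integral_eq)
qed

lemma ae_zero_of_box_integrals:
  fixes f :: "'a::euclidean_space \<Rightarrow> real"
  assumes fm[measurable]: "f \<in> borel_measurable lborel"
  and int: "\<And>l u. integrable lborel (\<lambda>x. indicator (box l u) x * f x)"
  and zero: "\<And>l u. (\<integral>x. indicator (box l u) x * f x \<partial>lborel) = 0"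
  shows "AE x in lborel. f x = 0"
proof -
  define P where "P x = ennreal (max 0 (f x))" for x
  define N where "N x = ennreal (max 0 (- f x))" for x
  have [measurable]: "P \<in> borel_measurable lborel" "N \<in> borel_measurable lborel"
    unfolding P_def[abs_def] N_def[abs_def] by measurable
  have key: "emeasure (density lborel P) (box l u) = ennreal (\<integral>x. indicator (box l u) x * max 0 (f x) \<partial>lborel)
     \<and> emeasure (density lborel N) (box l u) = ennreal (\<integral>x. indicator (box l u) x * max 0 (- f x) \<partial>lborel)
     \<and> integrable lborel (\<lambda>x. indicator (box l u) x * max 0 (f x))
     \<and> integrable lborel (\<lambda>x. indicator (box l u) x * max 0 (- f x))" for l u
  proof -
    have e1: "(\<lambda>x. indicator (box l u) x * max 0 (f x)) = (\<lambda>x. max 0 (indicator (box l u) x * f x))"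
      by (auto simp: indicator_def)
    have e2: "(\<lambda>x. indicator (box l u) x * max 0 (- f x)) = (\<lambda>x. max 0 (- (indicator (box l u) x * f x)))"
      by (auto simp: indicator_def)
    have i1: "integrable lborel (\<lambda>x. indicator (box l u) x * max 0 (f x))"
      unfolding e1 by (intro integrable_max integrable_zero int)
    have i2: "integrable lborel (\<lambda>x. indicator (box l u) x * max 0 (- f x))"
      unfolding e2 by (intro integrable_max integrable_zero integrable_minus int)
    have "emeasure (density lborel P) (box l u) = (\<integral>\<^sup>+x. ennreal (indicator (box l u) x * max 0 (f x)) \<partial>lborel)"
      by (subst emeasure_density) (auto simp: P_def indicator_def intro!: nn_integral_cong)
    also have "\<dots> = ennreal (\<integral>x. indicator (box l u) x * max 0 (f x) \<partial>lborel)"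
      by (rule nn_integral_eq_integral[OF i1]) (auto simp: indicator_def)
    finally have m1: "emeasure (density lborel P) (box l u) = ennreal (\<integral>x. indicator (box l u) x * max 0 (f x) \<partial>lborel)" .
    have "emeasure (density lborel N) (box l u) = (\<integral>\<^sup>+x. ennreal (indicator (box l u) x * max 0 (- f x)) \<partial>lborel)"
      by (subst emeasure_density) (auto simp: N_def indicator_def intro!: nn_integral_cong)
    also have "\<dots> = ennreal (\<integral>x. indicator (box l u) x * max 0 (- f x) \<partial>lborel)"
      by (rule nn_integral_eq_integral[OF i2]) (auto simp: indicator_def)
    finally show ?thesis using m1 i1 i2 by simp
  qed
  have eqbox: "emeasure (density lborel P) (box l u) = emeasure (density lborel N) (box l u)" for l u
  proof -
    have "(\<lambda>x. indicator (box l u) x * f x) = (\<lambda>x. indicator (box l u) x * max 0 (f x) - indicator (box l u) x * max 0 (- f x))"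
      by (auto simp: indicator_def max_def)
    then have "(\<integral>x. indicator (box l u) x * max 0 (f x) \<partial>lborel) - (\<integral>x. indicator (box l u) x * max 0 (- f x) \<partial>lborel) = 0"
      using zero[of l u] key[of l u] by (simp add: Bochner_Integration.integral_diff)
    then show ?thesis using key[of l u] by simp
  qed
  have "density lborel P = density lborel N"
  proof (rule measure_eqI_generator_eq[where E="range (\<lambda>(a,b). box a b)" and \<Omega>=UNIV
        and A="\<lambda>n. box (- (real n *\<^sub>R One)) (real n *\<^sub>R One)"])
    show "Int_stable (range (\<lambda>(a, b). box a b::'a set))"
      by (auto simp: Int_stable_def box_Int_box)
    show "range (\<lambda>(a, b). box a b) \<subseteq> Pow (UNIV::'a set)" by auto
    show "sets (density lborel P) = sigma_sets UNIV (range (\<lambda>(a, b). box a b))"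
      by (simp add: borel_eq_box)
    show "sets (density lborel N) = sigma_sets UNIV (range (\<lambda>(a, b). box a b))"
      by (simp add: borel_eq_box)
    show "range (\<lambda>n. box (- (real n *\<^sub>R One)) (real n *\<^sub>R One)) \<subseteq> range (\<lambda>(a, b). box a b::'a set)"
      by auto
    show "(\<Union>n. box (- (real n *\<^sub>R One)) (real n *\<^sub>R One)) = (UNIV::'a set)"
      by (rule UN_box_eq_UNIV)
    show "emeasure (density lborel P) (box (- (real n *\<^sub>R One)) (real n *\<^sub>R One)) \<noteq> \<infinity>" for n
      using key by simp
    show "emeasure (density lborel P) X = emeasure (density lborel N) X" if "X \<in> range (\<lambda>(a, b). box a b)" for X
      using that eqbox by auto
  qed
  then have "AE x in lborel. P x = N x"
    by (intro sigma_finite_measure.density_unique[OF sigma_finite_lborel]) auto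
  then show ?thesis
    by eventually_elim (auto simp: P_def N_def max_def split: if_splits)
qed

definition Qf :: "real \<Rightarrow> real" where "Qf s = (max 0 s)^2"

lemma Qf_le: "0 \<le> Qf y \<and> Qf y \<le> y^2"
  by (cases "y \<ge> 0") (simp_all add: Qf_def max_def)

lemma Qf_quot: "norm ((Qf y - Qf 0) / (y - 0)) \<le> \<bar>y\<bar>"
proof (cases "y = 0")
  case True then show ?thesis by simp
next
  case False
  have "norm ((Qf y - Qf 0) / (y - 0)) = Qf y / \<bar>y\<bar>"
    using Qf_le[of y] by (simp add: Qf_def[of 0])
  also have "\<dots> \<le> y^2 / \<bar>y\<bar>"
    using Qf_le[of y] False by (intro divide_right_mono) auto
  also have "\<dots> = \<bar>y\<bar> * \<bar>y\<bar> / \<bar>y\<bar>"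
    by (simp add: power2_eq_square)
  also have "\<dots> = \<bar>y\<bar>"
    using False by (metis abs_eq_0 nonzero_mult_div_cancel_right)
  finally show ?thesis .
qed

lemma Qf_deriv: "(Qf has_real_derivative 2 * max 0 s) (at s)"
proof -
  consider "s > 0" | "s < 0" | "s = 0" by linarith
  then show ?thesis
  proof cases
    case 1
    have "((\<lambda>s. s^2) has_real_derivative 2 * s) (at s)"
      by (rule DERIV_pow[where n=2, simplified])
    then have d: "((\<lambda>s. s^2) has_real_derivative 2 * max 0 s) (at s)"
      using 1 by simp
    show ?thesis
      using has_field_derivative_transform_within_open[OF d, of "{0<..}" Qf] 1 by (simp add: Qf_def)
  next
    case 2
    have "((\<lambda>s. 0) has_real_derivative 0) (at s)"
      by (rule DERIV_const)
    then have d: "((\<lambda>s. 0) has_real_derivative 2 * max 0 s) (at s)"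
      using 2 by simp
    show ?thesis
      using has_field_derivative_transform_within_open[OF d, of "{..<0}" Qf] 2 by (simp add: Qf_def)
  next
    case 3
    have "((\<lambda>y. (Qf y - Qf 0) / (y - 0)) \<longlongrightarrow> 0) (at 0)"
    proof (rule Lim_null_comparison)
      show "\<forall>\<^sub>F y in at 0. norm ((Qf y - Qf 0) / (y - 0)) \<le> \<bar>y\<bar>"
        by (intro always_eventually allI Qf_quot)
      have "((\<lambda>y. \<bar>y\<bar>) \<longlongrightarrow> \<bar>0\<bar>) (at (0::real))"
        by (intro tendsto_rabs tendsto_ident_at)
      then show "((\<lambda>y. \<bar>y\<bar>) \<longlongrightarrow> 0) (at (0::real))" by simp
    qed
    then show ?thesis using 3 by (simp add: has_field_derivative_iff)
  qed
qed
lemma Qf_deriv' [derivative_intros]: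
  "(g has_real_derivative g') (at x within S) \<Longrightarrow>
   ((\<lambda>x. Qf (g x)) has_real_derivative (2 * max 0 (g x) * g')) (at x within S)"
  using DERIV_chain2[OF Qf_deriv] by blast

definition Sm :: "real \<Rightarrow> real" where "Sm s = 2 * Qf s - 4 * Qf (s - 1/2) + 2 * Qf (s - 1)"
definition Sm' :: "real \<Rightarrow> real" where "Sm' s = 4 * max 0 s - 8 * max 0 (s - 1/2) + 4 * max 0 (s - 1)"

lemma Sm_deriv: "(Sm has_real_derivative Sm' s) (at s)"
  unfolding Sm_def[abs_def] Sm'_def
  by (auto intro!: derivative_eq_intros)

lemma Sm_zero: assumes "s \<le> 0" shows "Sm s = 0"
proof -
  have a: "Qf s = 0" "Qf (s - 1/2) = 0" "Qf (s - 1) = 0"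
    using assms by (simp_all add: Qf_def max_def)
  show ?thesis unfolding Sm_def a by simp
qed

lemma Sm_one: assumes "s \<ge> 1" shows "Sm s = 1"
proof -
  have a: "Qf s = s^2" "Qf (s - 1/2) = (s - 1/2)^2" "Qf (s - 1) = (s-1)^2"
    using assms by (simp_all add: Qf_def max_def)
  show ?thesis unfolding Sm_def a by (simp add: power2_eq_square algebra_simps)
qed

lemma Sm_bounds: "0 \<le> Sm s \<and> Sm s \<le> 1"
proof -
  consider "s \<le> 0" | "0 \<le> s" "s \<le> 1/2" | "1/2 \<le> s" "s \<le> 1" | "s \<ge> 1" by linarith
  then show ?thesis
  proof cases
    case 1 then show ?thesis using Sm_zero[of s] by simp
  next
    case 4 then show ?thesis using Sm_one[of s] by simp
  next
    case 2
    have a: "Qf s = s^2" "Qf (s - 1/2) = 0" "Qf (s - 1) = 0"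
      using 2 by (simp_all add: Qf_def max_def)
    have "Sm s = 2 * s^2" unfolding Sm_def a by simp
    moreover have "s^2 \<le> (1/2)^2" using 2 by (intro power_mono) auto
    moreover have "(1/2::real)^2 = 1/4" by (simp add: power2_eq_square)
    ultimately show ?thesis using zero_le_power2[of s] by linarith
  next
    case 3
    have a: "Qf s = s^2" "Qf (s - 1/2) = (s - 1/2)^2" "Qf (s - 1) = 0"
      using 3 by (simp_all add: Qf_def max_def)
    have "Sm s = 1 - 2 * (1 - s)^2" unfolding Sm_def a by (simp add: power2_eq_square algebra_simps)
    moreover have "(1-s)^2 \<le> (1/2)^2" using 3 by (intro power_mono) auto
    moreover have "(1/2::real)^2 = 1/4" by (simp add: power2_eq_square)
    ultimately show ?thesis using zero_le_power2[of "1-s"] by linarith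
  qed
qed

lemma continuous_Sm': "continuous_on UNIV Sm'"
  unfolding Sm'_def by (intro continuous_intros)

lemma continuous_on_Sm [continuous_intros]: "continuous_on S f \<Longrightarrow> continuous_on S (\<lambda>x. Sm (f x))"
  unfolding Sm_def Qf_def by (intro continuous_intros)

lemma continuous_on_Sm' [continuous_intros]: "continuous_on S f \<Longrightarrow> continuous_on S (\<lambda>x. Sm' (f x))"
  unfolding Sm'_def by (intro continuous_intros)

definition wfn :: "real \<Rightarrow> real \<Rightarrow> real \<Rightarrow> real \<Rightarrow> real" where
  "wfn n a b t = Sm (n * (t - a)) * Sm (n * (b - t))"
definition wfn' :: "real \<Rightarrow> real \<Rightarrow> real \<Rightarrow> real \<Rightarrow> real" where
  "wfn' n a b t = Sm' (n * (t - a)) * n * Sm (n * (b - t)) - Sm (n * (t - a)) * (Sm' (n * (b - t)) * n)"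

lemma wfn_deriv: "(wfn n a b has_real_derivative wfn' n a b t) (at t)"
proof -
  have e1: "((\<lambda>t. n * (t - a)) has_real_derivative n) (at t)"
    by (auto intro!: derivative_eq_intros)
  have d1: "((\<lambda>t. Sm (n * (t - a))) has_real_derivative Sm' (n * (t - a)) * n) (at t)"
    by (rule DERIV_chain2[OF Sm_deriv e1])
  have e2: "((\<lambda>t. n * (b - t)) has_real_derivative - n) (at t)"
    by (auto intro!: derivative_eq_intros)
  have d2: "((\<lambda>t. Sm (n * (b - t))) has_real_derivative Sm' (n * (b - t)) * (- n)) (at t)"
    by (rule DERIV_chain2[OF Sm_deriv e2])
  have "((\<lambda>t. Sm (n*(t-a)) * Sm (n*(b-t))) has_real_derivative wfn' n a b t) (at t)"
    by (rule DERIV_cong[OF DERIV_mult[OF d1 d2]]) (simp add: wfn'_def algebra_simps)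
  moreover have "wfn n a b = (\<lambda>t. Sm (n*(t-a)) * Sm (n*(b-t)))" by (rule ext) (simp add: wfn_def)
  ultimately show ?thesis by simp
qed

definition phiB :: "real \<Rightarrow> real^3 \<Rightarrow> real^3 \<Rightarrow> real^3 \<Rightarrow> real" where
  "phiB n l h x = (\<Prod>i\<in>UNIV. wfn n (l$i) (h$i) (x$i))"

definition DphiB :: "real \<Rightarrow> real^3 \<Rightarrow> real^3 \<Rightarrow> real^3 \<Rightarrow> real^3" where
  "DphiB n l h x = (\<chi> k. wfn' n (l$k) (h$k) (x$k) * (\<Prod>j\<in>UNIV-{k}. wfn n (l$j) (h$j) (x$j)))"

lemma wfn_zero_outside: "n \<ge> 0 \<Longrightarrow> \<not> (a < t \<and> t < b) \<Longrightarrow> wfn n a b t = 0"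
proof -
  assume n: "n \<ge> 0" and t: "\<not> (a < t \<and> t < b)"
  then consider "t \<le> a" | "b \<le> t" by linarith
  then show ?thesis
  proof cases
    case 1
    then have "n * (t - a) \<le> 0" using n by (simp add: mult_nonneg_nonpos)
    then show ?thesis by (simp add: wfn_def Sm_zero)
  next
    case 2
    then have "n * (b - t) \<le> 0" using n by (simp add: mult_nonneg_nonpos)
    then show ?thesis by (simp add: wfn_def Sm_zero)
  qed
qed

lemma wfn_bounds: "0 \<le> wfn n a b t \<and> wfn n a b t \<le> 1"
  using Sm_bounds[of "n * (t - a)"] Sm_bounds[of "n * (b - t)"]
  unfolding wfn_def by (simp add: mult_le_one)

lemma phiB_zero_outside: assumes "n \<ge> 0" "x \<notin> box l h" shows "phiB n l h x = 0"
proof -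
  obtain i where i: "\<not> (l$i < x$i \<and> x$i < h$i)" using assms(2) unfolding mem_box_cart by blast
  have "wfn n (l$i) (h$i) (x$i) = 0" by (rule wfn_zero_outside[OF assms(1) i])
  then show ?thesis unfolding phiB_def by (intro prod_zero) auto
qed

lemma phiB_bounds: "0 \<le> phiB n l h x \<and> phiB n l h x \<le> 1"
  unfolding phiB_def using wfn_bounds
  by (auto intro!: prod_nonneg prod_le_1)

lemma phiB_abs_le: "n \<ge> 0 \<Longrightarrow> \<bar>phiB n l h x\<bar> \<le> indicator (box l h) x"
  using phiB_bounds[of n l h x] phiB_zero_outside[of n x l h]
  by (auto simp: indicator_def)

lemma phiB_test: assumes n: "n \<ge> 0" shows "test_fun (phiB n l h) (DphiB n l h)"
  unfolding test_fun_def
proof (intro conjI allI)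
  fix x :: "real^3"
  have "((\<lambda>x. phiB n l h x) has_derivative
        (\<lambda>y. \<Sum>i\<in>UNIV. (y $ i * wfn' n (l$i) (h$i) (x$i)) * (\<Prod>j\<in>UNIV - {i}. wfn n (l$j) (h$j) (x$j)))) (at x)"
    unfolding phiB_def
    by (intro has_derivative_prod DERIV_compose_FDERIV[OF wfn_deriv]
         bounded_linear.has_derivative[OF bounded_linear_vec_nth has_derivative_ident])
  moreover have "(\<lambda>y. \<Sum>i\<in>UNIV. (y $ i * wfn' n (l$i) (h$i) (x$i)) * (\<Prod>j\<in>UNIV - {i}. wfn n (l$j) (h$j) (x$j)))
       = (\<lambda>y. DphiB n l h x \<bullet> y)"
    by (auto simp: DphiB_def inner_vec_def algebra_simps intro!: sum.cong)
  ultimately show "(phiB n l h has_derivative (\<lambda>y. DphiB n l h x \<bullet> y)) (at x)" by simp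
next
  show "continuous_on UNIV (DphiB n l h)"
    unfolding DphiB_def wfn'_def wfn_def
    by (intro continuous_on_vec_lambda continuous_intros)
next
  have "closure {x. phiB n l h x \<noteq> 0} \<subseteq> cbox l h"
  proof (rule closure_minimal)
    show "{x. phiB n l h x \<noteq> 0} \<subseteq> cbox l h"
      using phiB_zero_outside[OF n, of _ l h] box_subset_cbox by blast
    show "closed (cbox l h)" by (rule closed_cbox)
  qed
  then show "compact (closure {x. phiB n l h x \<noteq> 0})"
    by (metis closed_closure compact_Int_closed compact_cbox inf.absorb_iff2)
qed

lemma phiB_lim: "(\<lambda>n. phiB (real n) l h x) \<longlonglongrightarrow> indicator (box l h) x"
proof (cases "x \<in> box l h")
  case False
  then have "\<And>n. phiB (real n) l h x = 0" by (intro phiB_zero_outside) auto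
  then show ?thesis using False by simp
next
  case True
  then have gaps: "0 < x$i - l$i" "0 < h$i - x$i" for i unfolding mem_box_cart by auto
  have ev1: "\<forall>\<^sub>F n in sequentially. 1 \<le> real n * d" if d: "0 < d" for d :: real
  proof -
    obtain N :: nat where "1 / d \<le> real N" using real_arch_simple by blast
    have "1 \<le> real n * d" if "n \<ge> N" for n
    proof -
      have "1 / d \<le> real n" using \<open>1 / d \<le> real N\<close> that by (meson of_nat_le_iff order_trans)
      then show ?thesis using d by (simp add: pos_divide_le_eq)
    qed
    then show ?thesis by (auto simp: eventually_sequentially)
  qed
  have "\<forall>\<^sub>F n in sequentially. \<forall>i. 1 \<le> real n * (x$i - l$i) \<and> 1 \<le> real n * (h$i - x$i)"
    by (intro eventually_all_finite eventually_conj ev1 gaps)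
  then have "\<forall>\<^sub>F n in sequentially. phiB (real n) l h x = 1"
    by eventually_elim (simp add: phiB_def wfn_def Sm_one)
  then have "(\<lambda>n. phiB (real n) l h x) \<longlonglongrightarrow> 1"
    by (rule tendsto_eventually)
  then show ?thesis using True by simp
qed

lemma integrable_L2_bound:
  fixes g :: "'a \<Rightarrow> 'b::{banach, second_countable_topology}"
  assumes "g \<in> borel_measurable M" "integrable M (\<lambda>x. (a x)^2)" "integrable M (\<lambda>x. (b x)^2)"
    and "\<And>x. norm (g x) \<le> \<bar>a x\<bar> * \<bar>b x\<bar>"
  shows "integrable M g"
proof (rule Bochner_Integration.integrable_bound[where f="\<lambda>x. ((a x)^2 + (b x)^2) / 2"])
  show "integrable M (\<lambda>x. ((a x)^2 + (b x)^2) / 2)" using assms(2,3) by auto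
  show "g \<in> borel_measurable M" by fact
  show "AE x in M. norm (g x) \<le> norm (((a x)^2 + (b x)^2) / 2)"
  proof (intro AE_I2)
    fix x
    have "0 \<le> (\<bar>a x\<bar> - \<bar>b x\<bar>)^2" by simp
    then have "\<bar>a x\<bar> * \<bar>b x\<bar> \<le> ((a x)^2 + (b x)^2) / 2"
      by (simp add: power2_eq_square algebra_simps)
    then show "norm (g x) \<le> norm (((a x)^2 + (b x)^2) / 2)"
      using assms(4)[of x] by simp
  qed
qed

lemma test_fun_props:
  assumes "test_fun phi Dphi"
  shows "continuous_on UNIV phi" "phi \<in> borel_measurable lborel"
    "integrable lborel (\<lambda>x. (phi x)^2)"
proof -
  have d: "\<And>x. (phi has_derivative (\<lambda>h. Dphi x \<bullet> h)) (at x)"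
    and c: "compact (closure {x. phi x \<noteq> 0})" using assms unfolding test_fun_def by auto
  show cont: "continuous_on UNIV phi"
    by (intro continuous_at_imp_continuous_on ballI has_derivative_continuous[OF d])
  then show "phi \<in> borel_measurable lborel"
    using borel_measurable_continuous_onI by simp
  let ?C = "closure {x. phi x \<noteq> 0}"
  have "integrable lborel (\<lambda>x. indicator ?C x *\<^sub>R (phi x)^2)"
    by (intro borel_integrable_compact c continuous_intros continuous_on_subset[OF cont]) auto
  moreover have "(\<lambda>x. indicator ?C x *\<^sub>R (phi x)^2) = (\<lambda>x. (phi x)^2)"
  proof
    fix x show "indicator ?C x *\<^sub>R (phi x)^2 = (phi x)^2"
      using closure_subset[of "{x. phi x \<noteq> 0}"] by (cases "phi x = 0") (auto simp: indicator_def)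
  qed
  ultimately show "integrable lborel (\<lambda>x. (phi x)^2)" by simp
qed

lemma ae_zero_of_test:
  fixes H :: "real^3 \<Rightarrow> real"
  assumes Hm: "H \<in> borel_measurable lborel" and H2: "integrable lborel (\<lambda>x. (H x)^2)"
    and zero: "\<And>phi Dphi. test_fun phi Dphi \<Longrightarrow> (LINT x|lborel. H x * phi x) = 0"
  shows "AE x in lborel. H x = 0"
proof (rule ae_zero_of_box_integrals[OF Hm])
  fix l h :: "real^3"
  have ind2: "integrable lborel (\<lambda>x. (indicator (box l h) x :: real)^2)"
  proof -
    have "(\<lambda>x. (indicator (box l h) x :: real)^2) = indicator (box l h)"
      by (auto simp: indicator_def)
    then show ?thesis using emeasure_lborel_box_finite[of l h] by simp
  qed
  show int: "integrable lborel (\<lambda>x. indicator (box l h) x * H x)"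
    by (rule integrable_L2_bound[OF _ ind2 H2]) (use Hm in \<open>auto simp: abs_mult\<close>)
  have intw: "integrable lborel (\<lambda>x. indicator (box l h) x * \<bar>H x\<bar>)"
    by (rule integrable_L2_bound[OF _ ind2 H2]) (use Hm in \<open>auto simp: abs_mult\<close>)
  have phim: "(\<lambda>x. phiB (real n) l h x) \<in> borel_measurable lborel" for n
    using test_fun_props(2)[OF phiB_test[of "real n" l h]] by simp
  have lim: "(\<lambda>n. LINT x|lborel. phiB (real n) l h x * H x) \<longlonglongrightarrow> (LINT x|lborel. indicator (box l h) x * H x)"
  proof (rule integral_dominated_convergence[where w="\<lambda>x. indicator (box l h) x * \<bar>H x\<bar>"])
    show "(\<lambda>x. indicator (box l h) x * H x) \<in> borel_measurable lborel" using Hm by simp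
    show "(\<lambda>x. phiB (real n) l h x * H x) \<in> borel_measurable lborel" for n using Hm phim by simp
    show "integrable lborel (\<lambda>x. indicator (box l h) x * \<bar>H x\<bar>)" by (rule intw)
    show "AE x in lborel. (\<lambda>n. phiB (real n) l h x * H x) \<longlonglongrightarrow> indicator (box l h) x * H x"
      by (intro AE_I2 tendsto_mult phiB_lim tendsto_const)
    show "AE x in lborel. norm (phiB (real n) l h x * H x) \<le> indicator (box l h) x * \<bar>H x\<bar>" for n
      using phiB_abs_le[of "real n" l h] by (intro AE_I2) (auto simp: abs_mult intro!: mult_right_mono)
  qed
  have "(LINT x|lborel. phiB (real n) l h x * H x) = 0" for n
    using zero[OF phiB_test[of "real n" l h]] by (simp add: mult.commute)
  then have "(\<lambda>n. LINT x|lborel. phiB (real n) l h x * H x) = (\<lambda>n. 0)" by (rule ext)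
  with lim have "(\<lambda>n. 0::real) \<longlonglongrightarrow> (LINT x|lborel. indicator (box l h) x * H x)" by simp
  then show "(LINT x|lborel. indicator (box l h) x * H x) = 0"
    using LIMSEQ_unique[OF tendsto_const] by metis
qed

lemma integrable_G_phi:
  fixes G :: "real^3 \<Rightarrow> complex"
  assumes Gm: "G \<in> borel_measurable lborel" and G2: "integrable lborel (\<lambda>x. (cmod (G x))^2)"
    and t: "test_fun phi Dphi"
  shows "integrable lborel (\<lambda>x. G x * of_real (phi x))"
proof (rule integrable_L2_bound[OF _ G2 test_fun_props(3)[OF t]])
  show "(\<lambda>x. G x * complex_of_real (phi x)) \<in> borel_measurable lborel"
    using Gm test_fun_props(2)[OF t] by measurable
  show "norm (G x * complex_of_real (phi x)) \<le> \<bar>cmod (G x)\<bar> * \<bar>phi x\<bar>" for x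
    by (simp add: norm_mult)
qed

lemma weak_grad_unique_ae:
  assumes w1: "weak_grad u G1" and w2: "weak_grad u G2"
    and m1: "G1 i \<in> borel_measurable lborel" "integrable lborel (\<lambda>x. (cmod (G1 i x))^2)"
    and m2: "G2 i \<in> borel_measurable lborel" "integrable lborel (\<lambda>x. (cmod (G2 i x))^2)"
  shows "AE x in lborel. G1 i x = G2 i x"
proof -
  define D where "D x = G1 i x - G2 i x" for x
  have Dm: "D \<in> borel_measurable lborel" unfolding D_def[abs_def] using m1 m2 by measurable
  have zeroD: "(LINT x|lborel. D x * of_real (phi x)) = 0" if t: "test_fun phi Dphi" for phi Dphi
  proof -
    have a1: "(LINT x|lborel. u x * of_real (Dphi x $ i)) = - (LINT x|lborel. G1 i x * of_real (phi x))"
      using w1 t unfolding weak_grad_def by blast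
    have a2: "(LINT x|lborel. u x * of_real (Dphi x $ i)) = - (LINT x|lborel. G2 i x * of_real (phi x))"
      using w2 t unfolding weak_grad_def by blast
    have "(LINT x|lborel. G1 i x * of_real (phi x)) = (LINT x|lborel. G2 i x * of_real (phi x))"
      using a1 a2 by simp
    moreover have "(LINT x|lborel. D x * of_real (phi x)) =
        (LINT x|lborel. G1 i x * of_real (phi x)) - (LINT x|lborel. G2 i x * of_real (phi x))"
      unfolding D_def using integrable_G_phi[OF m1 t] integrable_G_phi[OF m2 t]
      by (simp add: left_diff_distrib Bochner_Integration.integral_diff)
    ultimately show ?thesis by simp
  qed
  have intD: "integrable lborel (\<lambda>x. D x * of_real (phi x))" if t: "test_fun phi Dphi" for phi Dphi
    unfolding D_def using integrable_G_phi[OF m1 t] integrable_G_phi[OF m2 t]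
    by (simp add: left_diff_distrib)
  have D2: "integrable lborel (\<lambda>x. (cmod (D x))^2)"
  proof -
    have "integrable lborel (\<lambda>x. 2 * (cmod (G1 i x))^2 + 2 * (cmod (G2 i x))^2)"
      using m1 m2 by auto
    then show ?thesis
    proof (rule Bochner_Integration.integrable_bound)
      show "(\<lambda>x. (cmod (D x))\<^sup>2) \<in> borel_measurable lborel" using Dm by measurable
      show "AE x in lborel. norm ((cmod (D x))\<^sup>2) \<le> norm (2 * (cmod (G1 i x))\<^sup>2 + 2 * (cmod (G2 i x))\<^sup>2)"
      proof (intro AE_I2)
        fix x
        have "cmod (D x) \<le> cmod (G1 i x) + cmod (G2 i x)" unfolding D_def by (rule norm_triangle_ineq4)
        then have "(cmod (D x))^2 \<le> (cmod (G1 i x) + cmod (G2 i x))^2" by (intro power_mono) auto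
        also have "\<dots> \<le> 2 * (cmod (G1 i x))^2 + 2 * (cmod (G2 i x))^2"
          using sum_squares_bound[of "cmod (G1 i x)" "cmod (G2 i x)"]
          by (simp add: power2_eq_square algebra_simps)
        finally show "norm ((cmod (D x))\<^sup>2) \<le> norm (2 * (cmod (G1 i x))\<^sup>2 + 2 * (cmod (G2 i x))\<^sup>2)"
          by simp
      qed
    qed
  qed
  have ReD: "AE x in lborel. Re (D x) = 0"
  proof (rule ae_zero_of_test)
    show "(\<lambda>x. Re (D x)) \<in> borel_measurable lborel" using Dm by measurable
    show "integrable lborel (\<lambda>x. (Re (D x))^2)"
    proof (rule Bochner_Integration.integrable_bound[OF D2])
      show "(\<lambda>x. (Re (D x))^2) \<in> borel_measurable lborel" using Dm by measurable
      show "AE x in lborel. norm ((Re (D x))^2) \<le> norm ((cmod (D x))^2)"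
        by (intro AE_I2) (simp add: cmod_power2)
    qed
    show "(LINT x|lborel. Re (D x) * phi x) = 0" if "test_fun phi Dphi" for phi Dphi
    proof -
      have "(LINT x|lborel. Re (D x * of_real (phi x))) = Re (LINT x|lborel. D x * of_real (phi x))"
        by (rule integral_Re[OF intD[OF that]])
      then show ?thesis using zeroD[OF that] by simp
    qed
  qed
  have ImD: "AE x in lborel. Im (D x) = 0"
  proof (rule ae_zero_of_test)
    show "(\<lambda>x. Im (D x)) \<in> borel_measurable lborel" using Dm by measurable
    show "integrable lborel (\<lambda>x. (Im (D x))^2)"
    proof (rule Bochner_Integration.integrable_bound[OF D2])
      show "(\<lambda>x. (Im (D x))^2) \<in> borel_measurable lborel" using Dm by measurable
      show "AE x in lborel. norm ((Im (D x))^2) \<le> norm ((cmod (D x))^2)"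
        by (intro AE_I2) (simp add: cmod_power2)
    qed
    show "(LINT x|lborel. Im (D x) * phi x) = 0" if "test_fun phi Dphi" for phi Dphi
    proof -
      have "(LINT x|lborel. Im (D x * of_real (phi x))) = Im (LINT x|lborel. D x * of_real (phi x))"
        by (rule integral_Im[OF intD[OF that]])
      then show ?thesis using zeroD[OF that] by simp
    qed
  qed
  from ReD ImD show ?thesis
    by eventually_elim (simp add: D_def complex_eq_iff)
qed

definition gradP :: "(real^3 \<Rightarrow> complex) \<Rightarrow> (3 \<Rightarrow> real^3 \<Rightarrow> complex) \<Rightarrow> bool" where
  "gradP u G \<longleftrightarrow> weak_grad u G \<and>
       (\<forall>i. G i \<in> borel_measurable lborel \<and> integrable lborel (\<lambda>x. (cmod (G i x))\<^sup>2))"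

lemma grad_sq_eq:
  assumes "gradP u G"
  shows "grad_sq u = (\<Sum>i\<in>UNIV. LINT x|lborel. (cmod (G i x))\<^sup>2)"
proof -
  let ?P = "\<lambda>s. \<exists>G. weak_grad u G \<and>
       (\<forall>i. G i \<in> borel_measurable lborel \<and> integrable lborel (\<lambda>x. (cmod (G i x))\<^sup>2)) \<and>
       s = (\<Sum>i\<in>UNIV. LINT x|lborel. (cmod (G i x))\<^sup>2)"
  have "?P (\<Sum>i\<in>UNIV. LINT x|lborel. (cmod (G i x))\<^sup>2)" using assms unfolding gradP_def by blast
  then have "?P (grad_sq u)" unfolding grad_sq_def by (rule someI)
  then obtain G' where G': "weak_grad u G'" "\<forall>i. G' i \<in> borel_measurable lborel \<and> integrable lborel (\<lambda>x. (cmod (G' i x))\<^sup>2)"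
    and eq: "grad_sq u = (\<Sum>i\<in>UNIV. LINT x|lborel. (cmod (G' i x))\<^sup>2)" by blast
  have "(LINT x|lborel. (cmod (G' i x))\<^sup>2) = (LINT x|lborel. (cmod (G i x))\<^sup>2)" for i
  proof (rule integral_cong_AE)
    show "AE x in lborel. (cmod (G' i x))\<^sup>2 = (cmod (G i x))\<^sup>2"
      using weak_grad_unique_ae[OF G'(1), of G i] G'(2) assms unfolding gradP_def by auto
  next
    have "integrable lborel (\<lambda>x. (cmod (G' i x))\<^sup>2)" using G'(2) by auto
    then show "(\<lambda>x. (cmod (G' i x))\<^sup>2) \<in> borel_measurable lborel" by (rule borel_measurable_integrable)
  next
    have "integrable lborel (\<lambda>x. (cmod (G i x))\<^sup>2)" using assms by (auto simp: gradP_def)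
    then show "(\<lambda>x. (cmod (G i x))\<^sup>2) \<in> borel_measurable lborel" by (rule borel_measurable_integrable)
  qed
  then show ?thesis using eq by simp
qed

lemma H1_gradP: "H1 u \<longleftrightarrow> u \<in> borel_measurable lborel \<and> integrable lborel (\<lambda>x. (cmod (u x))\<^sup>2) \<and> (\<exists>G. gradP u G)"
  unfolding H1_def gradP_def by blast

lemma int_scale3:
  fixes f :: "real^3 \<Rightarrow> 'b::{banach, second_countable_topology}"
  assumes b: "b > 0"
  shows "(LINT x|lborel. f (b *\<^sub>R x)) = (1 / b^3) *\<^sub>R (LINT y|lborel. f y)"
  using lborel_integral_scale[of b f] b by simp

lemma integrable_scale3:
  fixes f :: "real^3 \<Rightarrow> 'b::{banach, second_countable_topology}"
  assumes b: "b > 0" "integrable lborel f"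
  shows "integrable lborel (\<lambda>x. f (b *\<^sub>R x))"
  using lborel_integrable_scale[of f b] b by simp

lemma test_fun_scale:
  assumes t: "test_fun phi Dphi" and c: "c \<noteq> 0"
  shows "test_fun (\<lambda>y. phi (c *\<^sub>R y)) (\<lambda>y. c *\<^sub>R Dphi (c *\<^sub>R y))"
  unfolding test_fun_def
proof (intro conjI allI)
  have d: "\<And>x. (phi has_derivative (\<lambda>h. Dphi x \<bullet> h)) (at x)"
    and cD: "continuous_on UNIV Dphi"
    and cp: "compact (closure {x. phi x \<noteq> 0})" using t unfolding test_fun_def by auto
  fix x :: "real^3"
  have s: "((\<lambda>y. c *\<^sub>R y) has_derivative (\<lambda>h. c *\<^sub>R h)) (at x)"
    by (rule bounded_linear.has_derivative[OF bounded_linear_scaleR_right has_derivative_ident])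
  have "((\<lambda>y. phi (c *\<^sub>R y)) has_derivative (\<lambda>h. Dphi (c *\<^sub>R x) \<bullet> (c *\<^sub>R h))) (at x)"
    by (rule has_derivative_compose[OF s d])
  moreover have "(\<lambda>h. Dphi (c *\<^sub>R x) \<bullet> (c *\<^sub>R h)) = (\<lambda>h. (c *\<^sub>R Dphi (c *\<^sub>R x)) \<bullet> h)"
    by (rule ext) (simp only: inner_scaleR_left inner_scaleR_right)
  ultimately show "((\<lambda>y. phi (c *\<^sub>R y)) has_derivative (\<lambda>h. (c *\<^sub>R Dphi (c *\<^sub>R x)) \<bullet> h)) (at x)"
    by simp
next
  have d: "\<And>x. (phi has_derivative (\<lambda>h. Dphi x \<bullet> h)) (at x)"
    and cD: "continuous_on UNIV Dphi"
    and cp: "compact (closure {x. phi x \<noteq> 0})" using t unfolding test_fun_def by auto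
  show "continuous_on UNIV (\<lambda>y. c *\<^sub>R Dphi (c *\<^sub>R y))"
  proof -
    have "continuous_on UNIV (\<lambda>y::real^3. c *\<^sub>R y)"
      by (intro continuous_on_scaleR continuous_on_const continuous_on_id)
    then have "continuous_on UNIV (\<lambda>y. Dphi (c *\<^sub>R y))"
      by (rule continuous_on_compose2[OF cD]) auto
    then show ?thesis by (intro continuous_on_scaleR continuous_on_const)
  qed
  let ?S = "{x. phi x \<noteq> 0}"
  let ?f = "\<lambda>x::real^3. (1/c) *\<^sub>R x"
  have K: "compact (?f ` closure ?S)" by (rule compact_scaling[OF cp])
  have "{y. phi (c *\<^sub>R y) \<noteq> 0} \<subseteq> ?f ` closure ?S"
  proof
    fix y assume "y \<in> {y. phi (c *\<^sub>R y) \<noteq> 0}"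
    then have "c *\<^sub>R y \<in> ?S" by simp
    then have h1: "c *\<^sub>R y \<in> closure ?S" by (rule subsetD[OF closure_subset])
    have h2: "y = ?f (c *\<^sub>R y)" using c by (simp add: scaleR_scaleR)
    show "y \<in> ?f ` closure ?S"
      by (rule image_eqI[where f="\<lambda>x::real^3. (1/c) *\<^sub>R x" and x="c *\<^sub>R y", OF h2 h1])
  qed
  then have sub: "closure {y. phi (c *\<^sub>R y) \<noteq> 0} \<subseteq> ?f ` closure ?S"
    by (rule closure_minimal[OF _ compact_imp_closed[OF K]])
  have "compact (?f ` closure ?S \<inter> closure {y. phi (c *\<^sub>R y) \<noteq> 0})"
    by (rule compact_Int_closed[OF K closed_closure])
  moreover have "?f ` closure ?S \<inter> closure {y. phi (c *\<^sub>R y) \<noteq> 0} = closure {y. phi (c *\<^sub>R y) \<noteq> 0}"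
    using sub by (rule Int_absorb1)
  ultimately show "compact (closure {y. phi (c *\<^sub>R y) \<noteq> 0})" by simp
qed

lemma cscale: "(r::real) *\<^sub>R (z::complex) = of_real r * z"
  by (simp add: scaleR_conv_of_real)

definition sc :: "real \<Rightarrow> real \<Rightarrow> (real^3 \<Rightarrow> complex) \<Rightarrow> real^3 \<Rightarrow> complex" where
  "sc a b u = (\<lambda>x. of_real a * u (b *\<^sub>R x))"

lemma weak_grad_scale:
  assumes w: "weak_grad u G" and b: "b > 0"
  shows "weak_grad (sc a b u) (\<lambda>i x. of_real (a * b) * G i (b *\<^sub>R x))"
  unfolding weak_grad_def
proof (intro allI impI)
  fix phi Dphi i assume t: "test_fun phi Dphi"
  define psi where "psi y = phi ((1/b) *\<^sub>R y)" for y
  define Dpsi where "Dpsi y = (1/b) *\<^sub>R Dphi ((1/b) *\<^sub>R y)" for y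
  have tp: "test_fun psi Dpsi" unfolding psi_def[abs_def] Dpsi_def[abs_def]
    by (rule test_fun_scale[OF t]) (use b in auto)
  have W: "(LINT y|lborel. u y * of_real (Dpsi y $ i)) = - (LINT y|lborel. G i y * of_real (psi y))"
    using w tp unfolding weak_grad_def by blast
  define I1 where "I1 = (LINT x|lborel. u (b *\<^sub>R x) * of_real (Dphi x $ i))"
  define J where "J = (LINT y|lborel. u y * of_real (Dpsi y $ i))"
  define K1 where "K1 = (LINT x|lborel. G i (b *\<^sub>R x) * of_real (phi x))"
  define L where "L = (LINT y|lborel. G i y * of_real (psi y))"
  have E1: "(LINT x|lborel. u (b *\<^sub>R x) * of_real (Dpsi (b *\<^sub>R x) $ i)) = of_real (1 / b^3) * J"
    unfolding J_def using int_scale3[OF b, of "\<lambda>y. u y * of_real (Dpsi y $ i)"] by (simp add: cscale)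
  have E1': "(LINT x|lborel. u (b *\<^sub>R x) * of_real (Dpsi (b *\<^sub>R x) $ i)) = of_real (1/b) * I1"
  proof -
    have "\<And>x. u (b *\<^sub>R x) * of_real (Dpsi (b *\<^sub>R x) $ i) = of_real (1/b) * (u (b *\<^sub>R x) * of_real (Dphi x $ i))"
      using b by (simp add: Dpsi_def)
    then show ?thesis unfolding I1_def by simp
  qed
  have bb: "complex_of_real b * complex_of_real (1/b) = 1" using b by (simp flip: of_real_mult)
  have I1: "I1 = of_real b * (of_real (1 / b^3) * J)"
  proof -
    have e: "of_real (1/b) * I1 = of_real (1/b^3) * J" using E1' E1 by (rule trans[OF sym])
    have "I1 = of_real b * (of_real (1/b) * I1)" by (metis bb mult.assoc mult_1)
    also have "\<dots> = of_real b * (of_real (1/b^3) * J)" by (simp only: e)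
    finally show ?thesis .
  qed
  have E2: "(LINT x|lborel. G i (b *\<^sub>R x) * of_real (psi (b *\<^sub>R x))) = of_real (1 / b^3) * L"
    unfolding L_def using int_scale3[OF b, of "\<lambda>y. G i y * of_real (psi y)"] by (simp add: cscale)
  have E2': "\<And>x. psi (b *\<^sub>R x) = phi x" using b by (simp add: psi_def)
  have K1: "K1 = of_real (1 / b^3) * L" using E2 unfolding E2' K1_def .
  have b3: "complex_of_real (b^3) * complex_of_real (1/b^3) = 1" using b by (simp flip: of_real_mult)
  have L: "L = of_real (b^3) * K1"
    unfolding K1 by (metis b3 mult.assoc mult_1)
  have JL: "J = - L" using W unfolding J_def L_def .
  have "(LINT x|lborel. sc a b u x * of_real (Dphi x $ i)) = of_real a * I1"
    unfolding I1_def by (simp add: sc_def mult.assoc)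
  also have "\<dots> = - (of_real a * of_real b * ((of_real (1 / b^3) * of_real (b^3)) * K1))"
    unfolding I1 JL L by algebra
  also have "\<dots> = - (of_real (a * b) * K1)"
    using b3 by (simp add: mult.commute)
  also have "\<dots> = - (LINT x|lborel. of_real (a * b) * G i (b *\<^sub>R x) * of_real (phi x))"
    unfolding K1_def by (simp add: mult.assoc)
  finally show "(LINT x|lborel. sc a b u x * of_real (Dphi x $ i)) = - (LINT x|lborel. of_real (a * b) * G i (b *\<^sub>R x) * of_real (phi x))" .
qed

lemma sc_meas:
  assumes "u \<in> borel_measurable lborel"
  shows "sc a b u \<in> borel_measurable lborel"
proof -
  have [measurable]: "u \<in> borel_measurable borel" using assms by simp
  show ?thesis unfolding sc_def by measurable
qed

lemma Lq_pow_sc: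
  assumes a: "a > 0" and b: "b > 0"
  shows "Lq_pow q (sc a b u) = a powr q / b^3 * Lq_pow q u"
proof -
  have "\<And>x. cmod (sc a b u x) powr q = a powr q * (cmod (u (b *\<^sub>R x)) powr q)"
    using a by (simp add: sc_def norm_mult powr_mult)
  then have "Lq_pow q (sc a b u) = a powr q * (LINT x|lborel. cmod (u (b *\<^sub>R x)) powr q)"
    unfolding Lq_pow_def by simp
  also have "(LINT x|lborel. cmod (u (b *\<^sub>R x)) powr q) = (1 / b^3) * Lq_pow q u"
    unfolding Lq_pow_def using int_scale3[OF b, of "\<lambda>y. cmod (u y) powr q"] by simp
  finally show ?thesis by simp
qed

lemma gradP_sc:
  assumes g: "gradP u G" and b: "b > 0"
  shows "gradP (sc a b u) (\<lambda>i x. of_real (a * b) * G i (b *\<^sub>R x))"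
  unfolding gradP_def
proof (intro conjI allI)
  show "weak_grad (sc a b u) (\<lambda>i x. of_real (a * b) * G i (b *\<^sub>R x))"
    using g b weak_grad_scale unfolding gradP_def by blast
  fix i
  have Gm: "G i \<in> borel_measurable lborel" and G2: "integrable lborel (\<lambda>x. (cmod (G i x))\<^sup>2)"
    using g unfolding gradP_def by auto
  have [measurable]: "G i \<in> borel_measurable borel" using Gm by simp
  show "(\<lambda>x. of_real (a * b) * G i (b *\<^sub>R x)) \<in> borel_measurable lborel" by measurable
  have "integrable lborel (\<lambda>x. (a * b)^2 * (cmod (G i (b *\<^sub>R x)))\<^sup>2)"
    using integrable_scale3[OF b G2] by (intro integrable_mult_right)
  then show "integrable lborel (\<lambda>x. (cmod (of_real (a * b) * G i (b *\<^sub>R x)))\<^sup>2)"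
    by (simp add: norm_mult power_mult_distrib)
qed

lemma H1_sc:
  assumes h: "H1 u" and b: "b > 0"
  shows "H1 (sc a b u)"
proof -
  have um: "u \<in> borel_measurable lborel" and u2: "integrable lborel (\<lambda>x. (cmod (u x))\<^sup>2)"
    and g: "\<exists>G. gradP u G" using h unfolding H1_gradP by auto
  have "integrable lborel (\<lambda>x. a^2 * (cmod (u (b *\<^sub>R x)))\<^sup>2)"
    using integrable_scale3[OF b u2] by (intro integrable_mult_right)
  then have "integrable lborel (\<lambda>x. (cmod (sc a b u x))\<^sup>2)"
    by (simp add: sc_def norm_mult power_mult_distrib)
  moreover have "\<exists>G. gradP (sc a b u) G" using g gradP_sc[OF _ b] by blast
  ultimately show ?thesis unfolding H1_gradP using sc_meas[OF um] by blast
qed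

lemma grad_sq_sc:
  assumes h: "H1 u" and b: "b > 0"
  shows "grad_sq (sc a b u) = a^2 / b * grad_sq u"
proof -
  obtain G where g: "gradP u G" using h unfolding H1_gradP by auto
  have "grad_sq (sc a b u) = (\<Sum>i\<in>UNIV. LINT x|lborel. (cmod (of_real (a * b) * G i (b *\<^sub>R x)))\<^sup>2)"
    by (rule grad_sq_eq[OF gradP_sc[OF g b]])
  also have "\<dots> = (\<Sum>i\<in>UNIV. (a * b)^2 * (LINT x|lborel. (cmod (G i (b *\<^sub>R x)))\<^sup>2))"
    by (simp add: norm_mult power_mult_distrib)
  also have "\<dots> = (\<Sum>i\<in>UNIV. (a * b)^2 * ((1 / b^3) * (LINT x|lborel. (cmod (G i x))\<^sup>2)))"
    using int_scale3[OF b, of "\<lambda>y. (cmod (G _ y))\<^sup>2"] by simp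
  also have "\<dots> = a^2 / b * (\<Sum>i\<in>UNIV. LINT x|lborel. (cmod (G i x))\<^sup>2)"
    using b by (simp add: sum_distrib_left power2_eq_square power3_eq_cube field_simps)
  also have "\<dots> = a^2 / b * grad_sq u" using grad_sq_eq[OF g] by simp
  finally show ?thesis .
qed

definition gam :: "real \<Rightarrow> real" where "gam p = (3 * p - 7) / 2"
definition R1 :: "real \<Rightarrow> real \<Rightarrow> real" where "R1 p r = r powr ((p - 1) / 2)"
definition tau :: "real \<Rightarrow> real \<Rightarrow> real" where
  "tau p r = (max 1 (1 / min (R1 p r) (r^2))) powr (1 / gam p)"
definition rho :: "real \<Rightarrow> real \<Rightarrow> real" where
  "rho p r = max (R1 p r * r * tau p r powr (gam p + 2)) (r^3 * tau p r powr 6)"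
definition cc :: "real \<Rightarrow> real" where "cc p = 3 * (p - 1) / (2 * (p + 1))"

lemma gam_bounds: "7/3 < p \<Longrightarrow> p < 5 \<Longrightarrow> 0 < gam p \<and> gam p < 4"
  by (simp add: gam_def)

lemma cc_pos: "7/3 < p \<Longrightarrow> 0 < cc p"
  by (simp add: cc_def)

lemma R1_pos: "r > 0 \<Longrightarrow> R1 p r > 0" by (simp add: R1_def)

lemma tau_ge1: assumes "7/3 < p" "p < 5" shows "tau p r \<ge> 1"
  unfolding tau_def using gam_bounds[OF assms] by (intro ge_one_powr_ge_zero) auto

lemma rho_pos: assumes "7/3 < p" "p < 5" "r > 0" shows "rho p r > 0"
proof -
  have "tau p r > 0" using tau_ge1[OF assms(1,2), of r] by linarith
  then have "r^3 * tau p r powr 6 > 0" using assms by simp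
  then show ?thesis unfolding rho_def by (simp add: less_max_iff_disj)
qed

lemma rho_one: "rho p 1 = 1"
  by (simp add: rho_def tau_def R1_def)

lemma isCont_rho: assumes "7/3 < p" "p < 5" shows "isCont (rho p) 1"
proof -
  have g: "gam p \<noteq> 0" using gam_bounds[OF assms] by simp
  have "isCont (\<lambda>r. R1 p r) 1" unfolding R1_def by (intro continuous_intros) auto
  moreover have "isCont (\<lambda>r. tau p r) 1" unfolding tau_def R1_def
    by (intro continuous_intros) (auto simp: g)
  ultimately show ?thesis unfolding rho_def
    by (intro continuous_intros) (auto simp: tau_def R1_def)
qed

lemma key_real:
  assumes p: "7/3 < p" "p < 5" and r: "r > 0" and A: "A \<ge> 0" and B: "B \<ge> 0"
  shows "\<exists>t>0. t \<le> tau p r \<and> cc p * R1 p r * t powr gam p * A + r^2 * t^4 * B = cc p * A + B"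
proof -
  define g where "g = gam p"
  have g: "0 < g" "g < 4" using gam_bounds[OF p] by (auto simp: g_def)
  define c where "c = cc p"
  have c: "c > 0" using cc_pos[OF p(1)] by (simp add: c_def)
  define L1 where "L1 = min (R1 p r) (r^2)"
  define L2 where "L2 = max (R1 p r) (r^2)"
  have L1: "L1 > 0" using R1_pos[OF r, of p] r by (simp add: L1_def)
  have L2: "L2 > 0" using R1_pos[OF r, of p] by (simp add: L2_def less_max_iff_disj)
  define F where "F t = c * R1 p r * t powr g * A + r^2 * t^4 * B" for t
  define t0 where "t0 = min 1 ((1 / L2) powr (1 / g))"
  define T where "T = tau p r"
  have T1: "T \<ge> 1" using tau_ge1[OF p] by (simp add: T_def)
  have t0pos: "t0 > 0" using L2 by (simp add: t0_def)
  have t01: "t0 \<le> 1" by (simp add: t0_def)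
  have t0g: "t0 powr g \<le> 1 / L2"
  proof -
    have "t0 powr g \<le> ((1 / L2) powr (1 / g)) powr g"
      using t0pos g by (intro powr_mono2) (auto simp: t0_def)
    also have "\<dots> = 1 / L2" using g L2 by (simp add: powr_powr)
    finally show ?thesis .
  qed
  have t04: "t0^4 \<le> t0 powr g"
  proof -
    have "t0 powr 4 \<le> t0 powr g" using t0pos t01 g by (intro powr_mono') auto
    then show ?thesis using t0pos by simp
  qed
  have Tg: "T powr g \<ge> 1 / L1"
  proof -
    have "T powr g = max 1 (1 / L1)" unfolding T_def tau_def L1_def g_def[symmetric]
      using g L1 by (simp add: powr_powr L1_def)
    then show ?thesis by simp
  qed
  have T4: "T powr g \<le> T^4"
  proof -
    have "T powr g \<le> T powr 4" using T1 g by (intro powr_mono) auto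
    then show ?thesis using T1 by simp
  qed
  have F0: "F t0 \<le> c * A + B"
  proof -
    have "F t0 \<le> c * R1 p r * (1 / L2) * A + r^2 * (1 / L2) * B"
    proof -
      have "c * R1 p r * t0 powr g * A \<le> c * R1 p r * (1 / L2) * A"
        using c R1_pos[OF r, of p] A t0g by (intro mult_right_mono mult_left_mono) (auto intro: mult_nonneg_nonneg)
      moreover have "r^2 * t0^4 * B \<le> r^2 * (1 / L2) * B"
        using t04 t0g B by (intro mult_right_mono mult_left_mono) auto
      ultimately show ?thesis unfolding F_def by linarith
    qed
    also have "\<dots> \<le> c * A + B"
    proof -
      have "R1 p r * (1 / L2) \<le> 1" using L2 by (simp add: L2_def field_simps)
      moreover have "r^2 * (1 / L2) \<le> 1" using L2 by (simp add: L2_def field_simps)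
      ultimately have "c * A * (R1 p r * (1 / L2)) \<le> c * A * 1" "B * (r^2 * (1 / L2)) \<le> B * 1"
        using c A B by (intro mult_left_mono; simp)+
      then show ?thesis by (simp add: algebra_simps)
    qed
    finally show ?thesis .
  qed
  have FT: "c * A + B \<le> F T"
  proof -
    have "c * A + B \<le> c * R1 p r * (1 / L1) * A + r^2 * (1 / L1) * B"
    proof -
      have "R1 p r * (1 / L1) \<ge> 1" using L1 R1_pos[OF r, of p] by (simp add: L1_def field_simps)
      moreover have "r^2 * (1 / L1) \<ge> 1" using L1 r by (simp add: L1_def field_simps)
      ultimately have "c * A * 1 \<le> c * A * (R1 p r * (1 / L1))" "B * 1 \<le> B * (r^2 * (1 / L1))"
        using c A B by (intro mult_left_mono; simp)+
      then show ?thesis by (simp add: algebra_simps)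
    qed
    also have "\<dots> \<le> F T"
    proof -
      have "c * R1 p r * (1 / L1) * A \<le> c * R1 p r * T powr g * A"
        using c R1_pos[OF r, of p] A Tg by (intro mult_right_mono mult_left_mono) (auto intro: mult_nonneg_nonneg)
      moreover have "r^2 * (1 / L1) * B \<le> r^2 * T^4 * B"
        using T4 Tg B by (intro mult_right_mono mult_left_mono) auto
      ultimately show ?thesis unfolding F_def by linarith
    qed
    finally show ?thesis .
  qed
  have t0T: "t0 \<le> T" using t01 T1 by simp
  have cont: "continuous_on {t0..T} F"
    unfolding F_def using t0pos by (intro continuous_intros) auto
  obtain t where t: "t0 \<le> t" "t \<le> T" "F t = c * A + B"
    using IVT'[of F t0 "c * A + B" T, OF F0 FT t0T cont] by blast
  show ?thesis
    using t t0pos unfolding F_def c_def g_def T_def by (intro exI[of _ t]) auto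
qed

lemma Lq_nonneg: "Lq_pow q u \<ge> 0"
  unfolding Lq_pow_def by (intro Bochner_Integration.integral_nonneg) auto

lemma virial_G: "virial p u = 0 \<Longrightarrow> grad_sq u = cc p * Lq_pow (p + 1) u + Lq_pow 6 u"
  unfolding virial_def cc_def by simp

lemma energy_eq:
  assumes "7/3 < p" "virial p u = 0"
  shows "energy p u = (3 * p - 7) / (4 * (p + 1)) * Lq_pow (p + 1) u + Lq_pow 6 u / 3"
proof -
  have p1: "p + 1 \<noteq> 0" using assms by simp
  have gen: "(x * A + B) / 2 - A / q - B / 6 = (x / 2 - 1 / q) * A + B / 3" if "q \<noteq> 0" for x A B q :: real
    using that by (simp add: field_simps)
  have k1: "3 * (p - 1) / (2 * (p + 1)) / 2 = (3 * p - 3) / (4 * (p + 1))" by simp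
  have p4: "4 * p + 4 \<noteq> 0" using p1 by linarith
  have k2: "1 / (p + 1) = 4 / (4 * (p + 1))" using p1 p4 by (simp add: field_simps)
  have k: "3 * (p - 1) / (2 * (p + 1)) / 2 - 1 / (p + 1) = (3 * p - 7) / (4 * (p + 1))"
    unfolding k1 k2 diff_divide_distrib[symmetric] by simp
  have "energy p u = (cc p * Lq_pow (p + 1) u + Lq_pow 6 u) / 2 - Lq_pow (p + 1) u / (p + 1) - Lq_pow 6 u / 6"
    unfolding energy_def virial_G[OF assms(2)] ..
  also have "\<dots> = (cc p / 2 - 1 / (p + 1)) * Lq_pow (p + 1) u + Lq_pow 6 u / 3"
    by (rule gen[OF p1])
  finally show ?thesis unfolding cc_def k .
qed

lemma energy_nonneg:
  assumes "7/3 < p" "virial p u = 0"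
  shows "energy p u \<ge> 0"
proof -
  have "(3 * p - 7) / (4 * (p + 1)) \<ge> 0" using assms by simp
  then have "0 \<le> (3 * p - 7) / (4 * (p + 1)) * Lq_pow (p + 1) u"
    using Lq_nonneg[of "p+1" u] by (rule mult_nonneg_nonneg)
  moreover have "0 \<le> Lq_pow 6 u / 3" using Lq_nonneg[of 6 u] by simp
  ultimately show ?thesis unfolding energy_eq[OF assms] by linarith
qed

lemma transfer:
  assumes p: "7/3 < p" "p < 5" and u: "H1 u" "Lq_pow 2 u = m" "virial p u = 0" and r: "r > 0"
  shows "\<exists>v. H1 v \<and> Lq_pow 2 v = r * m \<and> virial p v = 0 \<and> energy p v \<le> rho p r * energy p u"
proof -
  define A where "A = Lq_pow (p + 1) u"
  define B where "B = Lq_pow 6 u"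
  define G where "G = grad_sq u"
  have A0: "A \<ge> 0" and B0: "B \<ge> 0" unfolding A_def B_def by (rule Lq_nonneg)+
  have GAB: "G = cc p * A + B" unfolding G_def A_def B_def by (rule virial_G[OF u(3)])
  obtain t where t: "t > 0" "t \<le> tau p r"
    and key: "cc p * R1 p r * t powr gam p * A + r^2 * t^4 * B = cc p * A + B"
    using key_real[OF p r A0 B0] by blast
  define a where "a = r powr (1/2) * t powr (3/2)"
  have a: "a > 0" using r t by (simp add: a_def)
  have apow: "a powr q = r powr (q / 2) * t powr (3 * q / 2)" for q
    unfolding a_def using r t by (simp add: powr_mult powr_powr)
  define v where "v = sc a t u"
  have Hv: "H1 v" unfolding v_def by (rule H1_sc[OF u(1) t(1)])
  have t3: "t powr 3 = t^3" using t by simp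
  have mass: "Lq_pow 2 v = r * m"
  proof -
    have "Lq_pow 2 v = a powr 2 / t^3 * m" unfolding v_def using Lq_pow_sc[OF a t(1)] u(2) by simp
    also have "a powr 2 = r * t^3" unfolding apow using r t3 by simp
    finally show ?thesis using t by simp
  qed
  have Gv: "grad_sq v = r * t^2 * G"
  proof -
    have "grad_sq v = a^2 / t * G" unfolding v_def G_def by (rule grad_sq_sc[OF u(1) t(1)])
    also have "a^2 = r * t^3" using apow[of 2] a r t3 by simp
    finally show ?thesis using t by (simp add: power2_eq_square power3_eq_cube)
  qed
  have Av: "Lq_pow (p + 1) v = r * R1 p r * t powr (gam p + 2) * A"
  proof -
    have "Lq_pow (p + 1) v = a powr (p + 1) / t^3 * A" unfolding v_def A_def by (rule Lq_pow_sc[OF a t(1)])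
    also have "a powr (p + 1) = r powr ((p + 1) / 2) * t powr (3 * (p + 1) / 2)" by (rule apow)
    also have "r powr ((p + 1) / 2) = r * R1 p r"
    proof -
      have e: "(p + 1) / 2 = 1 + (p - 1) / 2" by (simp add: field_simps)
      have "r powr ((p + 1) / 2) = r powr (1 + (p - 1) / 2)" by (simp only: e)
      also have "\<dots> = r powr 1 * r powr ((p - 1) / 2)" by (rule powr_add)
      finally show ?thesis unfolding R1_def using r by simp
    qed
    also have "t powr (3 * (p + 1) / 2) = t^3 * t powr (gam p + 2)"
    proof -
      have e: "3 * (p + 1) / 2 = 3 + (gam p + 2)" by (simp add: gam_def field_simps)
      have "t powr (3 * (p + 1) / 2) = t powr (3 + (gam p + 2))" by (simp only: e)
      also have "\<dots> = t powr 3 * t powr (gam p + 2)" by (rule powr_add)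
      finally show ?thesis using t by simp
    qed
    finally show ?thesis using t by simp
  qed
  have Bv: "Lq_pow 6 v = r^3 * t^6 * B"
  proof -
    have "Lq_pow 6 v = a powr 6 / t^3 * B" unfolding v_def B_def by (rule Lq_pow_sc[OF a t(1)])
    also have "a powr 6 = (r^3 * t^6) * t^3"
    proof -
      have "t^9 = t^6 * t^3" by (simp flip: power_add)
      then show ?thesis unfolding apow using r t by simp
    qed
    finally show ?thesis using t by simp
  qed
  have tg: "t powr (gam p + 2) = t^2 * t powr gam p" using t by (simp add: powr_add mult.commute)
  have vir: "virial p v = 0"
  proof -
    have "virial p v = r * t^2 * G - cc p * (r * R1 p r * t powr (gam p + 2) * A) - r^3 * t^6 * B"
      unfolding virial_def Gv Av Bv cc_def by simp
    also have "\<dots> = r * t^2 * (G - (cc p * R1 p r * t powr gam p * A + r^2 * t^4 * B))"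
    proof -
      have t6: "t^6 = t^2 * t^4" by (simp flip: power_add)
      have r3: "r^3 = r * r^2" by (simp add: power2_eq_square power3_eq_cube)
      show ?thesis unfolding tg t6 r3 by (simp add: algebra_simps)
    qed
    also have "\<dots> = 0" unfolding key GAB by simp
    finally show ?thesis .
  qed
  define al where "al = (3 * p - 7) / (4 * (p + 1))"
  have al: "al \<ge> 0" using p by (simp add: al_def)
  have Eu: "energy p u = al * A + B / 3" unfolding al_def A_def B_def by (rule energy_eq[OF p(1) u(3)])
  have Ev: "energy p v = al * (r * R1 p r * t powr (gam p + 2) * A) + r^3 * t^6 * B / 3"
    unfolding al_def energy_eq[OF p(1) vir] Av Bv ..
  have g: "gam p > 0" using gam_bounds[OF p] by simp
  have c1: "r * R1 p r * t powr (gam p + 2) \<le> rho p r"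
  proof -
    have "t powr (gam p + 2) \<le> tau p r powr (gam p + 2)" using t g by (intro powr_mono2) auto
    then have "r * R1 p r * t powr (gam p + 2) \<le> r * R1 p r * tau p r powr (gam p + 2)"
      using r R1_pos[OF r, of p] by (intro mult_left_mono) auto
    then show ?thesis unfolding rho_def by (simp add: mult.commute mult.left_commute)
  qed
  have c2: "r^3 * t^6 \<le> rho p r"
  proof -
    have "t^6 \<le> tau p r ^ 6" using t by (intro power_mono) auto
    also have "tau p r ^ 6 = tau p r powr 6" using tau_ge1[OF p, of r] by simp
    finally have "r^3 * t^6 \<le> r^3 * tau p r powr 6" using r by (intro mult_left_mono) auto
    then show ?thesis unfolding rho_def by simp
  qed
  have "energy p v \<le> al * (rho p r * A) + rho p r * B / 3"
  proof -
    have "al * (r * R1 p r * t powr (gam p + 2) * A) \<le> al * (rho p r * A)"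
      using al A0 c1 by (intro mult_left_mono mult_right_mono) auto
    moreover have "r^3 * t^6 * B / 3 \<le> rho p r * B / 3"
      using B0 c2 by (intro divide_right_mono mult_right_mono) auto
    ultimately show ?thesis unfolding Ev by linarith
  qed
  also have "\<dots> = rho p r * energy p u" unfolding Eu by (simp add: algebra_simps)
  finally show ?thesis using Hv mass vir by blast
qed

theorem proposition9p1:
  fixes p :: real
  assumes "7/3 < p" and "p < 5"
  shows "continuous_on {0<..} (E_min p)"
proof -
  note p = assms
  define S where "S m = {energy p u | u. H1 u \<and> Lq_pow 2 u = m \<and> virial p u = 0}" for m
  have Emin: "E_min p m = Inf (S m)" for m by (simp add: E_min_def S_def)
  have bdd: "bdd_below (S m)" for m
    unfolding S_def bdd_below_def using energy_nonneg[OF p(1)] by blast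
  have ne_transfer: "S m' \<noteq> {}" if m: "m > 0" "m' > 0" "S m \<noteq> {}" for m m'
  proof -
    obtain u where u: "H1 u" "Lq_pow 2 u = m" "virial p u = 0" using m(3) unfolding S_def by blast
    obtain v where v: "H1 v" "Lq_pow 2 v = m' / m * m" "virial p v = 0"
      using transfer[OF p u, of "m' / m"] m by auto
    have "Lq_pow 2 v = m'" using v(2) m by simp
    then show ?thesis unfolding S_def using v by blast
  qed
  have ineq: "E_min p m' \<le> rho p (m' / m) * E_min p m" if m: "m > 0" "m' > 0" "S m \<noteq> {}" for m m'
  proof -
    have rpos: "rho p (m' / m) > 0" using rho_pos[OF p] m by simp
    have "E_min p m' / rho p (m' / m) \<le> Inf (S m)"
    proof (rule cInf_greatest[OF m(3)])
      fix x assume "x \<in> S m"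
      then obtain u where u: "H1 u" "Lq_pow 2 u = m" "virial p u = 0" and x: "x = energy p u"
        unfolding S_def by blast
      obtain v where v: "H1 v" "Lq_pow 2 v = m' / m * m" "virial p v = 0"
        and ev: "energy p v \<le> rho p (m' / m) * energy p u"
        using transfer[OF p u, of "m' / m"] m by auto
      have "Lq_pow 2 v = m'" using v(2) m by simp
      then have "energy p v \<in> S m'" unfolding S_def using v by blast
      then have "E_min p m' \<le> energy p v" unfolding Emin by (rule cInf_lower[OF _ bdd])
      then have "E_min p m' \<le> rho p (m' / m) * energy p u" using ev by linarith
      then show "E_min p m' / rho p (m' / m) \<le> x" unfolding x using rpos
        by (simp add: divide_le_eq mult.commute)
    qed
    then show ?thesis unfolding Emin[of m] using rpos by (simp add: divide_le_eq mult.commute)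
  qed
  show ?thesis
  proof (cases "\<exists>m>0. S m \<noteq> {}")
    case False
    then have "\<And>m. m \<in> {0<..} \<Longrightarrow> E_min p m = Inf {}" unfolding Emin by auto
    then show ?thesis using continuous_on_const continuous_on_cong by (metis (no_types, lifting))
  next
    case True
    then obtain m1 where m1: "m1 > 0" "S m1 \<noteq> {}" by blast
    have ne: "S m \<noteq> {}" if "m > 0" for m using ne_transfer[OF m1(1) that m1(2)] .
    show ?thesis unfolding continuous_on_def
    proof (intro ballI)
      fix m0 :: real assume "m0 \<in> {0<..}"
      then have m0: "m0 > 0" by simp
      let ?F = "at m0 within {0<..}"
      have up: "\<forall>\<^sub>F m in ?F. E_min p m \<le> rho p (m / m0) * E_min p m0"
        unfolding eventually_at_filter
        by (intro always_eventually) (auto intro!: ineq m0 ne)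
      have lo: "\<forall>\<^sub>F m in ?F. E_min p m0 / rho p (m0 / m) \<le> E_min p m"
        unfolding eventually_at_filter
      proof (intro always_eventually allI impI)
        fix m :: real assume "m \<in> {0<..}"
        then have m: "m > 0" by simp
        have "E_min p m0 \<le> rho p (m0 / m) * E_min p m" by (rule ineq[OF m m0 ne[OF m]])
        moreover have "rho p (m0 / m) > 0" using rho_pos[OF p] m m0 by simp
        ultimately show "E_min p m0 / rho p (m0 / m) \<le> E_min p m"
          by (simp add: divide_le_eq mult.commute)
      qed
      have l1: "((\<lambda>m. m / m0) \<longlongrightarrow> 1) ?F"
      proof -
        have "((\<lambda>m. m / m0) \<longlongrightarrow> m0 / m0) ?F" using m0 by (intro tendsto_intros) auto
        then show ?thesis using m0 by simp
      qed
      have l2: "((\<lambda>m. m0 / m) \<longlongrightarrow> 1) ?F"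
      proof -
        have "((\<lambda>m. m0 / m) \<longlongrightarrow> m0 / m0) ?F" using m0 by (intro tendsto_intros) auto
        then show ?thesis using m0 by simp
      qed
      have r1: "((\<lambda>m. rho p (m / m0)) \<longlongrightarrow> 1) ?F"
        using isCont_tendsto_compose[OF isCont_rho[OF p] l1] by (simp add: rho_one)
      have r2: "((\<lambda>m. rho p (m0 / m)) \<longlongrightarrow> 1) ?F"
        using isCont_tendsto_compose[OF isCont_rho[OF p] l2] by (simp add: rho_one)
      have U: "((\<lambda>m. rho p (m / m0) * E_min p m0) \<longlongrightarrow> E_min p m0) ?F"
        using tendsto_mult[OF r1 tendsto_const[of "E_min p m0"]] by simp
      have L: "((\<lambda>m. E_min p m0 / rho p (m0 / m)) \<longlongrightarrow> E_min p m0) ?F"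
        using tendsto_divide[OF tendsto_const[of "E_min p m0"] r2] by simp
      show "(E_min p \<longlongrightarrow> E_min p m0) ?F"
        by (rule tendsto_sandwich[OF lo up L U])
    qed
  qed
qed

end
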